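(* Let $(\mathbb{X},\mathcal{X},\mu,T)$ be a probability space with $T$ an invertible, measure-preserving, ergodic transformation, let $f:\mathbb{X}\to\mathbb{R}$ be measurable and let $q$ be a fixed integer. Then $$\mu\Big(\bigcup_{N>0}\bigcap_{n>N}\{f\circ T^{-n}<f\circ T^{n+q}\}\Big)=0,$$ i.e. the set of points $x$ for which $f(T^{-n}x)<f(T^{n+q}x)$ holds for all sufficiently large $n$ is $\mu$-negligible. (In particular, for $q=0$: $\mu\big(\bigcup_{N>0}\bigcap_{n>N}\{f\circ T^{-n}<f\circ T^{n}\}\big)=0$.) *)

theory Defs
  imports "HOL-Probability.Probability"
begin

definition measure_preserving_map :: "'a measure \<Rightarrow> ('a \<Rightarrow> 'a) \<Rightarrow> bool" where
  "measure_preserving_map M T \<longleftrightarrow> T \<in> measurable M M \<and> distr M M T = M"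

definition invertible_mpt :: "'a measure \<Rightarrow> ('a \<Rightarrow> 'a) \<Rightarrow> bool" where
  "invertible_mpt M T \<longleftrightarrow> measure_preserving_map M T \<and> bij_betw T (space M) (space M)
     \<and> measure_preserving_map M (inv_into (space M) T)"

definition ergodic_map :: "'a measure \<Rightarrow> ('a \<Rightarrow> 'a) \<Rightarrow> bool" where
  "ergodic_map M T \<longleftrightarrow> (\<forall>A\<in>sets M. T -` A \<inter> space M = A \<longrightarrow>
      emeasure M A = 0 \<or> emeasure M A = 1)"

definition ipow :: "'a measure \<Rightarrow> ('a \<Rightarrow> 'a) \<Rightarrow> int \<Rightarrow> 'a \<Rightarrow> 'a" where
  "ipow M T k = (if 0 \<le> k then T ^^ nat k else (inv_into (space M) T) ^^ nat (- k))"

end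

theory Submission
  imports Defs
begin


lemma funpow_meas: "S \<in> measurable M M \<Longrightarrow> (S ^^ n) \<in> measurable M M"
  by (induction n) (auto intro: measurable_comp)

primrec mx :: "(nat \<Rightarrow> 'a \<Rightarrow> real) \<Rightarrow> nat \<Rightarrow> 'a \<Rightarrow> real" where
  "mx G 0 x = 0"
| "mx G (Suc n) x = max (mx G n x) (G (Suc n) x)"

lemma mx_nonneg: "0 \<le> mx G n x"
  by (induction n) auto

lemma mx_ge: "k \<in> {1..n} \<Longrightarrow> G k x \<le> mx G n x"
  by (induction n) (auto simp: le_Suc_eq max.coboundedI1)

lemma mx_pos: "mx G n x > 0 \<Longrightarrow> \<exists>k\<in>{1..n}. mx G n x = G k x"
  by (induction n) (auto simp: max_def split: if_splits)

lemma mx_bound: "(\<forall>k\<le>n. \<bar>G k x\<bar> \<le> B) \<Longrightarrow> 0 \<le> B \<Longrightarrow> \<bar>mx G n x\<bar> \<le> B"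
proof (induction n)
  case (Suc n)
  then have "\<bar>mx G n x\<bar> \<le> B" "\<bar>G (Suc n) x\<bar> \<le> B" by auto
  then show ?case by (simp add: max_def)
qed simp

lemma mx_meas: "(\<And>k. G k \<in> borel_measurable M) \<Longrightarrow> (\<lambda>x. mx G n x) \<in> borel_measurable M"
proof (induction n)
  case 0
  have "mx G 0 = (\<lambda>x. 0)" by (rule ext) simp
  then show ?case by simp
next
  case (Suc n)
  have "mx G (Suc n) = (\<lambda>x. max (mx G n x) (G (Suc n) x))" by (rule ext) simp
  then show ?case using Suc by (auto intro!: borel_measurable_max)
qed

lemma maximal_ergodic:
  fixes h :: "'a \<Rightarrow> real"
  assumes P: "prob_space M" and S: "measure_preserving_map M S"
    and hm: "h \<in> borel_measurable M" and hb: "\<And>x. x\<in>space M \<Longrightarrow> \<bar>h x\<bar> \<le> C"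
  shows "0 \<le> integral\<^sup>L M (\<lambda>x. indicator {x\<in>space M. mx (\<lambda>k x. \<Sum>i<k. h ((S^^i) x)) n x > 0} x * h x)"
proof -
  interpret prob_space M by fact
  have Sm: "S \<in> measurable M M" and D: "distr M M S = M"
    using S unfolding measure_preserving_map_def by auto
  define G where "G = (\<lambda>k x. \<Sum>i<k. h ((S^^i) x))"
  define Mx where "Mx = mx G n"
  have C0: "0 \<le> C" using hb[of "SOME x. x \<in> space M"] not_empty some_in_eq by fastforce
  have Gm: "G k \<in> borel_measurable M" for k
    unfolding G_def using funpow_meas[OF Sm] hm by (auto intro!: borel_measurable_sum measurable_comp)
  have Mm: "Mx \<in> borel_measurable M" unfolding Mx_def using mx_meas[OF Gm] by simp
  have Gb: "\<bar>G k x\<bar> \<le> n * C" if "k \<le> n" "x \<in> space M" for k x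
  proof -
    have "\<bar>G k x\<bar> \<le> (\<Sum>i<k. \<bar>h ((S^^i) x)\<bar>)" unfolding G_def by (rule sum_abs)
    also have "\<dots> \<le> (\<Sum>i<k. C)"
      using hb measurable_space[OF funpow_meas[OF Sm]] that by (intro sum_mono) auto
    also have "\<dots> \<le> n * C" using that C0 by (simp add: mult_right_mono)
    finally show ?thesis .
  qed
  have Mb: "\<bar>Mx x\<bar> \<le> n * C" if "x \<in> space M" for x
    unfolding Mx_def using Gb that C0 by (intro mx_bound) auto
  have Gsuc: "G (Suc k) x = h x + G k (S x)" for k x
    unfolding G_def sum.lessThan_Suc_shift by (simp add: funpow_Suc_right del: funpow.simps)
  have key: "Mx x - Mx (S x) \<le> indicator {x\<in>space M. Mx x > 0} x * h x" if x: "x \<in> space M" for x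
  proof (cases "Mx x > 0")
    case True
    obtain k where k: "k \<in> {1..n}" "Mx x = G k x" using mx_pos[OF True[unfolded Mx_def]] unfolding Mx_def by blast
    obtain k' where k': "k = Suc k'" using k(1) by (cases k) auto
    have "G k' (S x) \<le> Mx (S x)"
    proof (cases k')
      case 0 then show ?thesis by (simp add: G_def Mx_def mx_nonneg)
    next
      case (Suc m) then show ?thesis using k k' unfolding Mx_def by (intro mx_ge) auto
    qed
    moreover have "Mx x = h x + G k' (S x)" using k(2) Gsuc[of k' x] k' by simp
    ultimately have "Mx x - Mx (S x) \<le> h x" by linarith
    then show ?thesis using True x by (simp add: indicator_def)
  next
    case False
    then show ?thesis using mx_nonneg[of G n "S x"] x by (simp add: indicator_def Mx_def)
  qed
  have int1: "integrable M Mx"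
    using Mm Mb by (intro integrable_const_bound[where B="n*C"]) auto
  have MSm: "(\<lambda>x. Mx (S x)) \<in> borel_measurable M"
    using measurable_comp[OF Sm Mm] by (simp add: comp_def)
  have int2: "integrable M (\<lambda>x. Mx (S x))"
    using MSm Mb measurable_space[OF Sm] by (intro integrable_const_bound[where B="n*C"]) auto
  have int3: "integrable M (\<lambda>x. indicator {x\<in>space M. Mx x > 0} x * h x)"
    using Mm hm hb C0 by (intro integrable_const_bound[where B="C"]) (auto simp: indicator_def)
  have eq: "integral\<^sup>L M (\<lambda>x. Mx (S x)) = integral\<^sup>L M Mx"
    using integral_distr[OF Sm Mm] D by simp
  have "0 = integral\<^sup>L M (\<lambda>x. Mx x - Mx (S x))"
    using eq int1 int2 by simp
  also have "\<dots> \<le> integral\<^sup>L M (\<lambda>x. indicator {x\<in>space M. Mx x > 0} x * h x)"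
    using key int1 int2 int3 by (intro integral_mono) auto
  finally show ?thesis unfolding Mx_def G_def .
qed

lemma birkhoff_upper:
  assumes P: "prob_space M" and S: "measure_preserving_map M S" and Erg: "ergodic_map M S"
    and B: "B \<in> sets M" and r: "measure M B < r"
  shows "AE x in M. \<exists>m. \<forall>K\<ge>m. (\<Sum>k<K. indicator B ((S^^k) x)) \<le> r * real K"
proof -
  interpret prob_space M by fact
  have Sm: "S \<in> measurable M M" using S unfolding measure_preserving_map_def by auto
  define r0 where "r0 = (measure M B + r) / 2"
  have nn: "0 \<le> measure M B" by simp
  have r0a: "measure M B < r0" using r unfolding r0_def by (simp add: field_simps)
  have r0b: "r0 < r" using r unfolding r0_def by (simp add: field_simps)
  have r0c: "0 < r0" using r0a nn by linarith
  note r0 = r0a r0b r0c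
  define cnt where "cnt = (\<lambda>K x. \<Sum>k<K. indicator B ((S^^k) x) :: real)"
  have cntm[measurable]: "(\<lambda>x. cnt K x) \<in> borel_measurable M" for K
    unfolding cnt_def using funpow_meas[OF Sm] B
    by (intro borel_measurable_sum) (auto intro!: borel_measurable_indicator' measurable_comp)
  have cnt_suc: "cnt (Suc K) x = indicator B x + cnt K (S x)" for K x
    unfolding cnt_def sum.lessThan_Suc_shift by (simp add: funpow_Suc_right del: funpow.simps)
  have ind01: "0 \<le> (indicator B x::real)" "(indicator B x::real) \<le> 1" for x
    by (auto simp: indicator_def)
  define E where "E = {x\<in>space M. \<exists>j::nat. \<forall>m::nat. \<exists>K\<ge>m. cnt K x \<ge> (r0 + 1 / real (Suc j)) * real K}"
  have Es: "E \<in> sets M" unfolding E_def by measurable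
  have inv1: "S x \<in> E" if x: "x \<in> E" for x
  proof -
    from x obtain j where j: "\<forall>m::nat. \<exists>K\<ge>m. cnt K x \<ge> (r0 + 1 / real (Suc j)) * real K"
      and xs: "x \<in> space M" unfolding E_def by auto
    define e where "e = 1 / real (Suc j)"
    have e: "0 < e" "e * real (Suc j) = 1" unfolding e_def by auto
    have "\<exists>K\<ge>m. cnt K (S x) \<ge> (r0 + 1 / real (Suc (2*j+1))) * real K" for m
    proof -
      obtain K where K: "K \<ge> m + 2 * Suc j + 1" "cnt K x \<ge> (r0 + e) * real K"
        using j e_def by blast
      define K' where "K' = K - 1"
      have KK: "K = Suc K'" "K' \<ge> m" "real K' \<ge> 2 * real (Suc j)" using K(1) unfolding K'_def by auto
      have eK: "e * real K' \<ge> 2"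
      proof -
        have "e * real K' \<ge> e * (2 * real (Suc j))" using KK(3) e by (intro mult_left_mono) auto
        also have "e * (2 * real (Suc j)) = 2 * (e * real (Suc j))" by (simp only: mult.assoc mult.left_commute)
        finally show ?thesis using e(2) by simp
      qed
      have h2: "1 / real (Suc (2*j+1)) = e / 2" unfolding e_def by (simp add: field_simps)
      have "cnt K' (S x) = cnt K x - indicator B x" using cnt_suc[of K' x] KK by simp
      also have "\<dots> \<ge> (r0 + e) * real K - 1" using K(2) ind01[of x] by linarith
      finally have c1: "cnt K' (S x) \<ge> (r0 + e) * (real K' + 1) - 1" using KK by (simp add: ac_simps)
      have "(r0 + e/2) * real K' \<le> (r0 + e) * (real K' + 1) - 1"
        using eK r0 e by (simp add: algebra_simps)
      then have "(r0 + 1 / real (Suc (2*j+1))) * real K' \<le> cnt K' (S x)" unfolding h2 using c1 by linarith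
      then show ?thesis using KK(2) by blast
    qed
    then show ?thesis unfolding E_def using measurable_space[OF Sm xs] by blast
  qed
  have inv2: "x \<in> E" if x: "S x \<in> E" and xs: "x \<in> space M" for x
  proof -
    from x obtain j where j: "\<forall>m::nat. \<exists>K\<ge>m. cnt K (S x) \<ge> (r0 + 1 / real (Suc j)) * real K"
      unfolding E_def by auto
    define e where "e = 1 / real (Suc j)"
    have e: "0 < e" "e * real (Suc j) = 1" unfolding e_def by auto
    have "\<exists>K\<ge>m. cnt K x \<ge> (r0 + 1 / real (Suc (2*j+1))) * real K" for m
    proof -
      obtain K where K: "K \<ge> m + nat \<lceil>2 * r0 * real (Suc j)\<rceil> + 1" "cnt K (S x) \<ge> (r0 + e) * real K"
        using j e_def by blast
      have KK: "real K \<ge> 2 * r0 * real (Suc j) + 1" using K(1) by linarith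
      have eK: "e * real K \<ge> 2 * r0 + e"
      proof -
        have "e * real K \<ge> e * (2 * r0 * real (Suc j) + 1)" using KK e by (intro mult_left_mono) auto
        also have "e * (2 * r0 * real (Suc j) + 1) = 2 * r0 * (e * real (Suc j)) + e"
          by (simp only: distrib_left mult.assoc mult.left_commute mult_1_right)
        also have "\<dots> = 2 * r0 + e" using e(2) by simp
        finally show ?thesis .
      qed
      have h2: "1 / real (Suc (2*j+1)) = e / 2" unfolding e_def by (simp add: field_simps)
      have "cnt (Suc K) x \<ge> cnt K (S x)" using cnt_suc[of K x] ind01[of x] by linarith
      moreover have "(r0 + e/2) * real (Suc K) \<le> (r0 + e) * real K"
      proof -
        have "(r0 + e/2) * real (Suc K) = r0 * real K + r0 + (e * real K)/2 + e/2" by (simp add: algebra_simps)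
        moreover have "(r0 + e) * real K = r0 * real K + e * real K" by (simp add: algebra_simps)
        ultimately show ?thesis using eK by linarith
      qed
      ultimately have "(r0 + 1 / real (Suc (2*j+1))) * real (Suc K) \<le> cnt (Suc K) x"
        unfolding h2 using K(2) by linarith
      then show ?thesis using K(1) by (intro exI[of _ "Suc K"]) auto
    qed
    then show ?thesis unfolding E_def using xs by blast
  qed
  have Einv: "S -` E \<inter> space M = E"
    using inv1 inv2 Es sets.sets_into_space by blast
  have E0: "emeasure M E = 0"
  proof (rule ccontr)
    assume "emeasure M E \<noteq> 0"
    then have E1: "emeasure M E = 1" using Erg Es Einv unfolding ergodic_map_def by blast
    define h where "h = (\<lambda>x. indicator B x - r0 :: real)"
    define G where "G = (\<lambda>k x. \<Sum>i<k. h ((S^^i) x))"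
    have G_eq: "G k x = cnt k x - r0 * real k" for k x
      unfolding G_def h_def cnt_def by (simp add: sum_subtractf)
    define Q where "Q = (\<lambda>n. {x\<in>space M. mx G n x > 0})"
    have Gm: "G k \<in> borel_measurable M" for k
      using cntm[of k] unfolding G_eq[abs_def] by measurable
    have Qs: "Q n \<in> sets M" for n
    proof -
      have "(\<lambda>x. mx G n x) \<in> borel_measurable M" by (rule mx_meas[OF Gm])
      then show ?thesis unfolding Q_def by measurable
    qed
    have Qinc: "incseq Q"
    proof (rule incseq_SucI)
      fix n show "Q n \<subseteq> Q (Suc n)" unfolding Q_def by auto
    qed
    have EQ: "E \<subseteq> (\<Union>n. Q n)"
    proof
      fix x assume x: "x \<in> E"
      then obtain j where j: "\<forall>m::nat. \<exists>K\<ge>m. cnt K x \<ge> (r0 + 1 / real (Suc j)) * real K"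
        and xs: "x \<in> space M" unfolding E_def by auto
      obtain K where K: "K \<ge> 1" "cnt K x \<ge> (r0 + 1 / real (Suc j)) * real K" using j by blast
      have "(1 / real (Suc j)) * real K > 0" using K by auto
      moreover have "(r0 + 1 / real (Suc j)) * real K = r0 * real K + (1 / real (Suc j)) * real K"
        by (simp add: algebra_simps)
      ultimately have "G K x > 0" using K G_eq[of K x] by linarith
      then have "mx G K x > 0" using mx_ge[of K K G x] K by auto
      then show "x \<in> (\<Union>n. Q n)" using xs unfolding Q_def by auto
    qed
    have hm: "h \<in> borel_measurable M" unfolding h_def using B by measurable
    have hb: "\<bar>h x\<bar> \<le> 1 + r0" for x using r0 unfolding h_def by (auto simp: indicator_def)
    have ineq: "r0 * measure M (Q n) \<le> measure M B" for n
    proof -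
      have "0 \<le> integral\<^sup>L M (\<lambda>x. indicator (Q n) x * h x)"
        using maximal_ergodic[OF P S hm, of "1 + r0" n] hb unfolding Q_def G_def by simp
      also have "(\<lambda>x. indicator (Q n) x * h x) = (\<lambda>x. indicator (Q n \<inter> B) x - r0 * indicator (Q n) x)"
        unfolding h_def by (auto simp: indicator_def fun_eq_iff)
      also have "integral\<^sup>L M \<dots> = measure M (Q n \<inter> B) - r0 * measure M (Q n)"
      proof -
        have i1: "integrable M (indicator (Q n \<inter> B) :: 'a \<Rightarrow> real)"
          using Qs[of n] B by (intro integrable_real_indicator) (auto simp: less_top[symmetric])
        have i2: "integrable M (\<lambda>x. r0 * (indicator (Q n) x :: real))"
          using Qs[of n] by (intro integrable_mult_right integrable_real_indicator) (auto simp: less_top[symmetric])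
        have "integral\<^sup>L M (\<lambda>x. indicator (Q n \<inter> B) x - r0 * indicator (Q n) x)
            = integral\<^sup>L M (indicator (Q n \<inter> B)) - integral\<^sup>L M (\<lambda>x. r0 * (indicator (Q n) x :: real))"
          by (rule Bochner_Integration.integral_diff[OF i1 i2])
        also have "\<dots> = measure M (Q n \<inter> B) - r0 * measure M (Q n)"
          using Qs[of n] B sets.sets_into_space[OF Qs[of n]] by (simp add: Int_absorb2 Int_assoc inf.absorb1)
        finally show ?thesis .
      qed
      finally have "r0 * measure M (Q n) \<le> measure M (Q n \<inter> B)" by simp
      also have "\<dots> \<le> measure M B" using B by (intro finite_measure_mono) auto
      finally show ?thesis .
    qed
    have lim: "(\<lambda>n. measure M (Q n)) \<longlonglongrightarrow> measure M (\<Union>n. Q n)"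
      using Qs Qinc by (intro finite_Lim_measure_incseq) auto
    have "measure M (\<Union>n. Q n) = 1"
    proof -
      have "measure M E = 1" using E1 by (simp add: measure_def)
      moreover have "measure M E \<le> measure M (\<Union>n. Q n)" using EQ Qs by (intro finite_measure_mono) auto
      moreover have "measure M (\<Union>n. Q n) \<le> 1" by (rule prob_le_1)
      ultimately show ?thesis by linarith
    qed
    with lim have "(\<lambda>n. r0 * measure M (Q n)) \<longlonglongrightarrow> r0 * 1"
      by (intro tendsto_mult tendsto_const) auto
    then have "r0 \<le> measure M B" using ineq by (intro LIMSEQ_le_const2) auto
    then show False using r0 by linarith
  qed
  have "AE x in M. x \<notin> E" using E0 Es by (intro AE_not_in) auto
  then show ?thesis
  proof (rule AE_mp[OF _ AE_I2], intro impI)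
    fix x assume xs: "x \<in> space M" and xE: "x \<notin> E"
    obtain j where j: "inverse (real (Suc j)) < r - r0" using reals_Archimedean[of "r - r0"] r0 by auto
    from xE xs obtain m where m: "\<forall>K\<ge>m. \<not> cnt K x \<ge> (r0 + 1 / real (Suc j)) * real K"
      unfolding E_def by auto
    have "cnt K x \<le> r * real K" if "K \<ge> m" for K
    proof -
      have "cnt K x < (r0 + 1 / real (Suc j)) * real K" using m that by auto
      also have "\<dots> \<le> r * real K" using j by (intro mult_right_mono) (auto simp: field_simps)
      finally show ?thesis by simp
    qed
    then show "\<exists>m. \<forall>K\<ge>m. (\<Sum>k<K. indicator B ((S^^k) x)) \<le> r * real K" unfolding cnt_def by blast
  qed
qed




lemma sum_ind_card: fixes K :: nat shows "(\<Sum>k<K. indicator P (g k) :: real) = real (card {k. k < K \<and> g k \<in> P})"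
proof (induction K)
  case 0
  then show ?case by simp
next
  case (Suc K)
  have fin: "finite {k. k < K \<and> g k \<in> P}" by auto
  have nin: "K \<notin> {k. k < K \<and> g k \<in> P}" by auto
  show ?case
  proof (cases "g K \<in> P")
    case True
    then have S: "{k. k < Suc K \<and> g k \<in> P} = insert K {k. k < K \<and> g k \<in> P}" by (auto simp: less_Suc_eq)
    show ?thesis unfolding S using card_insert_disjoint[OF fin nin] Suc.IH True by simp
  next
    case False
    then have S: "{k. k < Suc K \<and> g k \<in> P} = {k. k < K \<and> g k \<in> P}" by (auto simp: less_Suc_eq)
    show ?thesis unfolding S using Suc.IH False by simp
  qed
qed

lemma card_split: fixes K :: nat shows "card {k. k < K \<and> P k} + card {k. k < K \<and> \<not> P k} = K"
proof -
  have "card ({k. k < K \<and> P k} \<union> {k. k < K \<and> \<not> P k}) = card {k. k < K \<and> P k} + card {k. k < K \<and> \<not> P k}"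
    by (intro card_Un_disjoint) auto
  also have "{k. k < K \<and> P k} \<union> {k. k < K \<and> \<not> P k} = {..<K}" by auto
  finally show ?thesis by simp
qed

lemma birkhoff_card:
  assumes P: "prob_space M" and S: "measure_preserving_map M S" and Erg: "ergodic_map M S"
    and B: "B \<in> sets M" and r: "measure M B < r"
  shows "AE x in M. \<exists>m. \<forall>K\<ge>m. real (card {k. k < K \<and> (S^^k) x \<in> B}) \<le> r * real K"
  using birkhoff_upper[OF assms] by (simp add: sum_ind_card)

lemma birkhoff_lower:
  assumes P: "prob_space M" and S: "measure_preserving_map M S" and Erg: "ergodic_map M S"
    and B: "B \<in> sets M" and r: "r < measure M B"
  shows "AE x in M. \<exists>m. \<forall>K\<ge>m. r * real K \<le> real (card {k. k < K \<and> (S^^k) x \<in> B})"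
proof -
  interpret prob_space M by fact
  have Sm: "S \<in> measurable M M" using S unfolding measure_preserving_map_def by auto
  have "measure M (space M - B) < 1 - r" using prob_compl[OF B] r by simp
  from birkhoff_card[OF P S Erg _ this] B
  have "AE x in M. \<exists>m. \<forall>K\<ge>m. real (card {k. k < K \<and> (S^^k) x \<in> space M - B}) \<le> (1 - r) * real K"
    by auto
  then show ?thesis
  proof (rule AE_mp[OF _ AE_I2], intro impI)
    fix x assume xs: "x \<in> space M" and "\<exists>m. \<forall>K\<ge>m. real (card {k. k < K \<and> (S^^k) x \<in> space M - B}) \<le> (1 - r) * real K"
    then obtain m where m: "\<forall>K\<ge>m. real (card {k. k < K \<and> (S^^k) x \<in> space M - B}) \<le> (1 - r) * real K" by blast
    have "r * real K \<le> real (card {k. k < K \<and> (S^^k) x \<in> B})" if "K \<ge> m" for K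
    proof -
      have sp: "(S^^k) x \<in> space M" for k using measurable_space[OF funpow_meas[OF Sm] xs] .
      have "{k. k < K \<and> (S^^k) x \<in> space M - B} = {k. k < K \<and> \<not> (S^^k) x \<in> B}" using sp by auto
      then have "real (card {k. k < K \<and> \<not> (S^^k) x \<in> B}) \<le> (1 - r) * real K" using m that by auto
      moreover have h: "card {k. k < K \<and> (S^^k) x \<in> B} + card {k. k < K \<and> \<not> (S^^k) x \<in> B} = K"
        by (rule card_split)
      have "real (card {k. k < K \<and> (S^^k) x \<in> B}) + real (card {k. k < K \<and> \<not> (S^^k) x \<in> B}) = real K"
        using arg_cong[OF h, of real] by simp
      moreover have "(1 - r) * real K = real K - r * real K" by (simp add: algebra_simps)
      ultimately show ?thesis by linarith
    qed
    then show "\<exists>m. \<forall>K\<ge>m. r * real K \<le> real (card {k. k < K \<and> (S^^k) x \<in> B})" by blast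
  qed
qed

lemma threshold:
  fixes f :: "'a \<Rightarrow> real"
  assumes P: "prob_space M" and fm: "f \<in> borel_measurable M" and d: "0 < d" "d \<le> 1"
  shows "\<exists>s. measure M {x\<in>space M. f x < s} < d \<and> 0 < measure M {x\<in>space M. f x \<le> s}"
proof -
  interpret prob_space M by fact
  define \<phi> where "\<phi> t = measure M {x\<in>space M. f x < t}" for t
  have mono: "\<phi> t \<le> \<phi> t'" if "t \<le> t'" for t t'
    unfolding \<phi>_def using that fm by (intro finite_measure_mono) auto
  have lim1: "(\<lambda>n. \<phi> (- real n)) \<longlonglongrightarrow> measure M (\<Inter>n. {x\<in>space M. f x < - real n})"
    unfolding \<phi>_def using fm by (intro finite_Lim_measure_decseq) (auto simp: decseq_def)
  have "(\<Inter>n. {x\<in>space M. f x < - real n}) = {}"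
  proof safe
    fix x assume "x \<in> (\<Inter>n. {x\<in>space M. f x < - real n})"
    then have "f x < - real (nat \<lceil>- f x\<rceil>)" by auto
    then show "x \<in> {}" by linarith
  qed
  with lim1 have lim1: "(\<lambda>n. \<phi> (- real n)) \<longlonglongrightarrow> 0" by simp
  have "eventually (\<lambda>n. \<phi> (- real n) < d/2) sequentially"
    using lim1 d by (intro order_tendstoD(2)) auto
  then obtain n1 where n1: "\<phi> (- real n1) < d/2" unfolding eventually_sequentially by blast
  have lim2: "(\<lambda>n. \<phi> (real n)) \<longlonglongrightarrow> measure M (\<Union>n. {x\<in>space M. f x < real n})"
    unfolding \<phi>_def using fm by (intro finite_Lim_measure_incseq) (auto simp: incseq_def)
  have "(\<Union>n. {x\<in>space M. f x < real n}) = space M"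
  proof safe
    fix x assume "x \<in> space M"
    moreover have "f x < real (Suc (nat \<lceil>f x\<rceil>))" by linarith
    ultimately show "x \<in> (\<Union>n. {x\<in>space M. f x < real n})" by blast
  qed
  with lim2 have lim2: "(\<lambda>n. \<phi> (real n)) \<longlonglongrightarrow> 1" by (simp add: prob_space)
  have "eventually (\<lambda>n. \<phi> (real n) > d/2) sequentially"
    using lim2 d by (intro order_tendstoD(1)) auto
  then obtain n2 where n2: "\<phi> (real n2) > d/2" unfolding eventually_sequentially by blast
  define T where "T = {t. \<phi> t < d/2}"
  define s where "s = Sup T"
  have Tne: "- real n1 \<in> T" using n1 unfolding T_def by auto
  have Tbdd: "t \<le> real n2" if "t \<in> T" for t
  proof (rule ccontr)
    assume "\<not> t \<le> real n2"
    then have "\<phi> (real n2) \<le> \<phi> t" by (intro mono) auto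
    then show False using that n2 unfolding T_def by auto
  qed
  have bdd: "bdd_above T" using Tbdd by (auto simp: bdd_above_def)
  have below: "\<phi> t < d/2" if ts: "t < s" for t
  proof -
    have "\<exists>t'\<in>T. t < t'" using less_cSup_iff[OF _ bdd, of t] Tne ts unfolding s_def by auto
    then obtain t' where "t' \<in> T" "t < t'" by blast
    then show ?thesis using mono[of t t'] unfolding T_def by auto
  qed
  have above: "\<phi> t \<ge> d/2" if "s < t" for t
    using that cSup_upper[OF _ bdd, of t] unfolding s_def T_def by force
  have lim3: "(\<lambda>n. \<phi> (s - 1 / real (Suc n))) \<longlonglongrightarrow> measure M (\<Union>n. {x\<in>space M. f x < s - 1 / real (Suc n)})"
  proof -
    have "incseq (\<lambda>n. {x\<in>space M. f x < s - 1 / real (Suc n)})"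
    proof (rule incseq_SucI)
      fix n
      have "1 / real (Suc (Suc n)) \<le> 1 / real (Suc n)" by (simp add: frac_le)
      then show "{x\<in>space M. f x < s - 1 / real (Suc n)} \<subseteq> {x\<in>space M. f x < s - 1 / real (Suc (Suc n))}"
        by auto
    qed
    moreover have "range (\<lambda>n. {x\<in>space M. f x < s - 1 / real (Suc n)}) \<subseteq> sets M" using fm by auto
    ultimately show ?thesis unfolding \<phi>_def by (intro finite_Lim_measure_incseq) auto
  qed
  have "(\<Union>n. {x\<in>space M. f x < s - 1 / real (Suc n)}) = {x\<in>space M. f x < s}"
  proof safe
    fix x assume x: "x \<in> space M" "f x < s"
    then obtain n where "inverse (real (Suc n)) < s - f x" using reals_Archimedean[of "s - f x"] by auto
    then have "f x < s - 1 / real (Suc n)" by (simp add: field_simps)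
    with x show "x \<in> (\<Union>n. {x\<in>space M. f x < s - 1 / real (Suc n)})" by blast
  next
    fix x n assume "f x < s - 1 / real (Suc n)"
    moreover have "0 \<le> 1 / real (Suc n)" by simp
    ultimately show "f x < s" by linarith
  qed
  with lim3 have lim3: "(\<lambda>n. \<phi> (s - 1 / real (Suc n))) \<longlonglongrightarrow> \<phi> s" unfolding \<phi>_def by simp
  have b': "\<phi> (s - 1 / real (Suc n)) \<le> d/2" for n
  proof -
    have "s - 1 / real (Suc n) < s" by simp
    then show ?thesis using below by fastforce
  qed
  have "\<phi> s \<le> d/2"
    using lim3 b' by (intro LIMSEQ_le_const2) auto
  moreover
  define \<psi> where "\<psi> = measure M {x\<in>space M. f x \<le> s}"
  have lim4: "(\<lambda>n. \<phi> (s + 1 / real (Suc n))) \<longlonglongrightarrow> measure M (\<Inter>n. {x\<in>space M. f x < s + 1 / real (Suc n)})"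
  proof -
    have "decseq (\<lambda>n. {x\<in>space M. f x < s + 1 / real (Suc n)})"
    proof (rule decseq_SucI)
      fix n
      have "1 / real (Suc (Suc n)) \<le> 1 / real (Suc n)" by (simp add: frac_le)
      then show "{x\<in>space M. f x < s + 1 / real (Suc (Suc n))} \<subseteq> {x\<in>space M. f x < s + 1 / real (Suc n)}"
        by auto
    qed
    moreover have "range (\<lambda>n. {x\<in>space M. f x < s + 1 / real (Suc n)}) \<subseteq> sets M" using fm by auto
    ultimately show ?thesis unfolding \<phi>_def by (intro finite_Lim_measure_decseq) auto
  qed
  have "(\<Inter>n. {x\<in>space M. f x < s + 1 / real (Suc n)}) = {x\<in>space M. f x \<le> s}"
  proof safe
    fix x assume x: "x \<in> (\<Inter>n. {x\<in>space M. f x < s + 1 / real (Suc n)})"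
    show "f x \<le> s"
    proof (rule ccontr)
      assume "\<not> f x \<le> s"
      then obtain n where "inverse (real (Suc n)) < f x - s" using reals_Archimedean[of "f x - s"] by auto
      moreover have "f x < s + 1 / real (Suc n)" using x by auto
      ultimately show False by (simp add: field_simps)
    qed
  next
    fix x n assume "f x \<le> s"
    moreover have "0 < 1 / real (Suc n)" by simp
    ultimately show "f x < s + 1 / real (Suc n)" by linarith
  qed auto
  with lim4 have lim4: "(\<lambda>n. \<phi> (s + 1 / real (Suc n))) \<longlonglongrightarrow> \<psi>" unfolding \<psi>_def by simp
  have a': "d/2 \<le> \<phi> (s + 1 / real (Suc n))" for n
  proof -
    have "s < s + 1 / real (Suc n)" by simp
    then show ?thesis using above by fastforce
  qed
  have "d/2 \<le> \<psi>"
    using lim4 a' by (intro LIMSEQ_le_const) auto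
  ultimately show ?thesis using d unfolding \<phi>_def \<psi>_def by (intro exI[of _ s]) auto
qed




lemma inv_facts:
  assumes "invertible_mpt M T" and x: "x \<in> space M"
  shows "T x \<in> space M" "inv_into (space M) T x \<in> space M"
    "T (inv_into (space M) T x) = x" "inv_into (space M) T (T x) = x"
proof -
  have b: "bij_betw T (space M) (space M)" using assms(1) unfolding invertible_mpt_def by auto
  show "T x \<in> space M" using b x by (auto simp: bij_betw_def)
  show "inv_into (space M) T x \<in> space M" using b x by (metis bij_betw_def inv_into_into)
  show "T (inv_into (space M) T x) = x" using bij_betw_inv_into_right[OF b x] .
  show "inv_into (space M) T (T x) = x" using bij_betw_inv_into_left[OF b x] .
qed

lemma funpow_space: "(\<And>y. y \<in> space M \<Longrightarrow> S y \<in> space M) \<Longrightarrow> x \<in> space M \<Longrightarrow> (S ^^ k) x \<in> space M"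
  by (induction k) auto

lemma ipow_space:
  assumes "invertible_mpt M T" "x \<in> space M"
  shows "ipow M T a x \<in> space M"
  unfolding ipow_def using inv_facts[OF assms(1)] assms(2)
  by (auto intro!: funpow_space)

lemma ipow_succ:
  assumes I: "invertible_mpt M T" and x: "x \<in> space M"
  shows "ipow M T (a + 1) x = T (ipow M T a x)"
proof (cases "0 \<le> a")
  case True
  then have "nat (a + 1) = Suc (nat a)" by auto
  then show ?thesis using True unfolding ipow_def by simp
next
  case False
  define m where "m = nat (- (a + 1))"
  have m: "nat (- a) = Suc m" using False unfolding m_def by auto
  have sp: "((inv_into (space M) T) ^^ m) x \<in> space M"
    using inv_facts[OF I] x by (auto intro!: funpow_space)
  have "ipow M T (a + 1) x = ((inv_into (space M) T) ^^ m) x"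
    unfolding ipow_def m_def using False by (cases "a = -1") auto
  also have "\<dots> = T (((inv_into (space M) T) ^^ Suc m) x)"
    using inv_facts(3)[OF I sp] by simp
  also have "\<dots> = T (ipow M T a x)" unfolding ipow_def using False m by simp
  finally show ?thesis .
qed

lemma ipow_pred:
  assumes I: "invertible_mpt M T" and x: "x \<in> space M"
  shows "ipow M T (a - 1) x = inv_into (space M) T (ipow M T a x)"
  using ipow_succ[OF I x, of "a - 1"] inv_facts(4)[OF I ipow_space[OF I x, of "a - 1"]] by simp

lemma ipow_add:
  assumes I: "invertible_mpt M T" and x: "x \<in> space M"
  shows "ipow M T (a + b) x = ipow M T a (ipow M T b x)"
proof (induction a rule: int_induct[where k=0])
  case base
  then show ?case by (simp add: ipow_def)
next
  case (step1 i)
  have "ipow M T (i + 1 + b) x = ipow M T ((i + b) + 1) x" by (simp add: algebra_simps)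
  also have "\<dots> = T (ipow M T (i + b) x)" by (rule ipow_succ[OF I x])
  also have "\<dots> = ipow M T (i + 1) (ipow M T b x)"
    using step1 ipow_succ[OF I ipow_space[OF I x]] by simp
  finally show ?case .
next
  case (step2 i)
  have "ipow M T (i - 1 + b) x = ipow M T ((i + b) - 1) x" by (simp add: algebra_simps)
  also have "\<dots> = inv_into (space M) T (ipow M T (i + b) x)" by (rule ipow_pred[OF I x])
  also have "\<dots> = ipow M T (i - 1) (ipow M T b x)"
    using step2 ipow_pred[OF I ipow_space[OF I x]] by simp
  finally show ?case .
qed

lemma ipow_nat: "ipow M T (int k) = T ^^ k"
  unfolding ipow_def by simp

lemma ipow_neg: "ipow M T (- int k) = (inv_into (space M) T) ^^ k"
proof (cases k)
  case 0
  then show ?thesis by (simp add: ipow_def)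
next
  case (Suc m)
  then have "\<not> 0 \<le> - int k" by simp
  then show ?thesis unfolding ipow_def by simp
qed

lemma ergodic_inv:
  assumes I: "invertible_mpt M T" and E: "ergodic_map M T"
  shows "ergodic_map M (inv_into (space M) T)"
  unfolding ergodic_map_def
proof (intro ballI impI)
  fix A assume As: "A \<in> sets M" and inv: "inv_into (space M) T -` A \<inter> space M = A"
  have A_sp: "A \<subseteq> space M" using inv by blast
  have eqv: "T x \<in> A \<longleftrightarrow> x \<in> A" if xs: "x \<in> space M" for x
  proof -
    have "inv_into (space M) T (T x) \<in> A \<longleftrightarrow> T x \<in> A" using inv inv_facts(1)[OF I xs] by blast
    then show ?thesis using inv_facts(4)[OF I xs] by simp
  qed
  have "T -` A \<inter> space M = A" using A_sp eqv by blast
  then show "emeasure M A = 0 \<or> emeasure M A = 1" using E As unfolding ergodic_map_def by blast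
qed

lemma ipow_meas:
  assumes I: "invertible_mpt M T"
  shows "ipow M T a \<in> measurable M M"
proof -
  have "T \<in> measurable M M" "inv_into (space M) T \<in> measurable M M"
    using I unfolding invertible_mpt_def measure_preserving_map_def by auto
  then show ?thesis unfolding ipow_def by (auto intro: funpow_meas)
qed




lemma main_null:
  fixes M :: "'a measure" and T :: "'a \<Rightarrow> 'a" and f :: "'a \<Rightarrow> real" and q :: int and N :: nat
  assumes P: "prob_space M"
    and I: "invertible_mpt M T"
    and Erg: "ergodic_map M T"
    and fm: "f \<in> borel_measurable M"
    and As: "A \<in> sets M"
    and Adef: "A = {x\<in>space M. \<forall>n::nat. n > N \<longrightarrow> f (ipow M T (- int n) x) < f (ipow M T (int n + q) x)}"
  shows "A \<in> null_sets M"
proof (rule ccontr)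
  interpret prob_space M by fact
  assume nA: "A \<notin> null_sets M"
  define Ti where "Ti = inv_into (space M) T"
  have Tmp: "measure_preserving_map M T" and Timp: "measure_preserving_map M Ti"
    using I unfolding invertible_mpt_def Ti_def by auto
  have ErgI: "ergodic_map M Ti" unfolding Ti_def by (rule ergodic_inv[OF I Erg])
  define c where "c = measure M A"
  have c: "0 < c" "c \<le> 1"
  proof -
    have "c \<noteq> 0" using nA As unfolding c_def by (metis emeasure_eq_measure ennreal_0 null_setsI)
    then show "0 < c" unfolding c_def using measure_nonneg[of M A] by linarith
    show "c \<le> 1" unfolding c_def by (rule prob_le_1)
  qed
  obtain s where s1: "measure M {x\<in>space M. f x < s} < c/2" and s2: "0 < measure M {x\<in>space M. f x \<le> s}"
    using threshold[OF P fm, of "c/2"] c by auto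
  define U where "U = {x\<in>space M. f x < s}"
  define Z where "Z = {x\<in>space M. f x \<le> s}"
  define u where "u = measure M U"
  define z where "z = measure M Z"
  have Us: "U \<in> sets M" unfolding U_def using fm by measurable
  have Zs: "Z \<in> sets M" unfolding Z_def using fm by measurable
  have u: "u < c/2" "0 \<le> u" using s1 unfolding u_def U_def by auto
  have z: "0 < z" using s2 unfolding z_def Z_def by auto
  define \<eta> where "\<eta> = min ((c - 2*u)/4) (z/2)"
  have e1a: "\<eta> \<le> (c - 2*u)/4" unfolding \<eta>_def by (rule min.cobounded1)
  have e1b: "\<eta> \<le> z/2" unfolding \<eta>_def by (rule min.cobounded2)
  note e1 = e1a e1b
  have e2: "0 < \<eta>" using u z unfolding \<eta>_def by auto
  have e3: "4 * \<eta> \<le> c - 2*u" using e1a by (simp add: field_simps)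
  have e4: "\<eta> < z" using e1b z by (simp add: field_simps)
  note \<eta> = e2 e3 e4
  have a1: "AE x in M. \<exists>m. \<forall>K\<ge>m. (c - \<eta>) * real K \<le> real (card {k. k < K \<and> (T^^k) x \<in> A})"
    using birkhoff_lower[OF P Tmp Erg As, of "c - \<eta>"] \<eta> unfolding c_def by auto
  have a2: "AE x in M. \<exists>m. \<forall>K\<ge>m. real (card {k. k < K \<and> (T^^k) x \<in> U}) \<le> (u + \<eta>) * real K"
    using birkhoff_card[OF P Tmp Erg Us, of "u + \<eta>"] \<eta> unfolding u_def by auto
  have a3: "AE x in M. \<exists>m. \<forall>K\<ge>m. real (card {k. k < K \<and> (Ti^^k) x \<in> U}) \<le> (u + \<eta>) * real K"
    using birkhoff_card[OF P Timp ErgI Us, of "u + \<eta>"] \<eta> unfolding u_def by auto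
  have a4: "AE x in M. \<exists>m. \<forall>K\<ge>m. (z - \<eta>) * real K \<le> real (card {k. k < K \<and> (T^^k) x \<in> Z})"
    using birkhoff_lower[OF P Tmp Erg Zs, of "z - \<eta>"] \<eta> unfolding z_def by auto
  have "AE x in M. False"
    using AE_space a1 a2 a3 a4
  proof eventually_elim
    case (elim x)
    then have xs: "x \<in> space M" by simp
    from elim obtain ma mb mc md where
      ma: "\<forall>K\<ge>ma. (c - \<eta>) * real K \<le> real (card {k. k < K \<and> (T^^k) x \<in> A})" and
      mb: "\<forall>K\<ge>mb. real (card {k. k < K \<and> (T^^k) x \<in> U}) \<le> (u + \<eta>) * real K" and
      mc: "\<forall>K\<ge>mc. real (card {k. k < K \<and> (Ti^^k) x \<in> U}) \<le> (u + \<eta>) * real K" and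
      md: "\<forall>K\<ge>md. (z - \<eta>) * real K \<le> real (card {k. k < K \<and> (T^^k) x \<in> Z})"
      by blast
    define Q where "Q = nat \<bar>q\<bar>"
    have Qq: "q \<le> int Q" "- int Q \<le> q" unfolding Q_def by auto
    define a where "a = c - \<eta>"
    define b where "b = 2 * (u + \<eta>)"
    define C0 where "C0 = a * (real N + real Q) + b * (real Q + 1)"
    have ab: "\<eta> \<le> a - b" using \<eta> unfolding a_def b_def by argo
    define I0 where "I0 = ma + N + Q + mb + mc + nat \<lceil>C0 / \<eta>\<rceil> + 1"
    obtain i where i: "i \<ge> I0" "(T^^i) x \<in> Z"
    proof -
      define K1 where "K1 = md + nat \<lceil>(real I0 + 1) / (z - \<eta>)\<rceil>"
      have "(z - \<eta>) * real K1 \<le> real (card {k. k < K1 \<and> (T^^k) x \<in> Z})"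
        using md[rule_format, of K1] unfolding K1_def by simp
      moreover have "(z - \<eta>) * real K1 \<ge> real I0 + 1"
      proof -
        have "real K1 \<ge> (real I0 + 1) / (z - \<eta>)" unfolding K1_def by linarith
        then have "(z - \<eta>) * real K1 \<ge> (z - \<eta>) * ((real I0 + 1) / (z - \<eta>))"
          using \<eta> by (intro mult_left_mono) auto
        then show ?thesis using \<eta> by simp
      qed
      ultimately have big: "card {k. k < K1 \<and> (T^^k) x \<in> Z} > I0" by linarith
      have "\<exists>i. i \<ge> I0 \<and> (T^^i) x \<in> Z"
      proof (rule ccontr)
        assume "\<not> ?thesis"
        then have "{k. k < K1 \<and> (T^^k) x \<in> Z} \<subseteq> {..<I0}" by (auto simp: not_le)
        then have "card {k. k < K1 \<and> (T^^k) x \<in> Z} \<le> I0" using card_mono[of "{..<I0}"] by fastforce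
        then show False using big by simp
      qed
      then show ?thesis using that by blast
    qed
    define K where "K = i - N - Q"
    define R where "R = i + Q"
    have iK: "real K = real i - real N - real Q" unfolding K_def using i(1) unfolding I0_def by auto
    define SA where "SA = {k. k < K \<and> (T^^k) x \<in> A}"
    define \<phi> where "\<phi> k = 2 * int k + q - int i" for k
    define Bad where "Bad = {j::int. - int R \<le> j \<and> j \<le> int R \<and> ipow M T j x \<in> U}"
    have fi: "f ((T^^i) x) \<le> s" using i(2) unfolding Z_def by auto
    have map: "\<phi> k \<in> Bad" if k: "k \<in> SA" for k
    proof -
      have kK: "k < K" and yA: "(T^^k) x \<in> A" using k unfolding SA_def by auto
      define nn where "nn = nat (int i - int k - q)"
      have nn: "int nn = int i - int k - q" "nn > N"
        using kK Qq unfolding nn_def K_def by auto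
      have fl: "f (ipow M T (- int nn) ((T^^k) x)) < f (ipow M T (int nn + q) ((T^^k) x))"
        using yA nn(2) unfolding Adef by auto
      have yk: "(T^^k) x = ipow M T (int k) x" by (simp add: ipow_nat)
      have e1: "- int nn + int k = \<phi> k" unfolding \<phi>_def using nn(1) by (simp add: algebra_simps)
      have e2: "int nn + q + int k = int i" using nn(1) by (simp add: algebra_simps)
      have "ipow M T (- int nn) ((T^^k) x) = ipow M T (- int nn + int k) x"
        unfolding yk by (rule ipow_add[OF I xs, symmetric])
      moreover have "ipow M T (int nn + q) ((T^^k) x) = ipow M T (int nn + q + int k) x"
        unfolding yk by (rule ipow_add[OF I xs, symmetric])
      moreover have "ipow M T (int i) x = (T^^i) x" by (simp add: ipow_nat)
      ultimately have eqs: "ipow M T (- int nn) ((T^^k) x) = ipow M T (\<phi> k) x"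
        "ipow M T (int nn + q) ((T^^k) x) = (T^^i) x" using e1 e2 by simp_all
      have "f (ipow M T (\<phi> k) x) < s" using fl eqs fi by simp
      then have "ipow M T (\<phi> k) x \<in> U" unfolding U_def using ipow_space[OF I xs] by auto
      moreover have "- int R \<le> \<phi> k" "\<phi> k \<le> int R" using kK Qq unfolding \<phi>_def R_def K_def by auto
      ultimately show ?thesis unfolding Bad_def by auto
    qed
    have inj: "inj_on \<phi> SA" unfolding \<phi>_def by (auto simp: inj_on_def)
    have finBad: "finite Bad" unfolding Bad_def by (rule finite_subset[of _ "{- int R..int R}"]) auto
    have c1: "card SA \<le> card Bad"
    proof -
      have "card SA = card (\<phi> ` SA)" using card_image[OF inj] by simp
      also have "\<dots> \<le> card Bad" using map finBad by (intro card_mono) auto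
      finally show ?thesis .
    qed
    define Fw where "Fw = {k. k < R + 1 \<and> (T^^k) x \<in> U}"
    define Bw where "Bw = {k. k < R + 1 \<and> (Ti^^k) x \<in> U}"
    have "Bad \<subseteq> int ` Fw \<union> (\<lambda>k. - int k) ` Bw"
    proof
      fix j assume j: "j \<in> Bad"
      show "j \<in> int ` Fw \<union> (\<lambda>k. - int k) ` Bw"
      proof (cases "0 \<le> j")
        case True
        then have "j = int (nat j)" by simp
        moreover have "nat j \<in> Fw" using j True unfolding Bad_def Fw_def ipow_def by auto
        ultimately show ?thesis by blast
      next
        case False
        then have "j = - int (nat (- j))" by simp
        moreover have "nat (- j) \<in> Bw" using j False unfolding Bad_def Bw_def ipow_def Ti_def by auto
        ultimately show ?thesis by blast
      qed
    qed
    then have "card Bad \<le> card (int ` Fw \<union> (\<lambda>k. - int k) ` Bw)"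
      by (intro card_mono) (auto simp: Fw_def Bw_def)
    also have "\<dots> \<le> card (int ` Fw) + card ((\<lambda>k. - int k) ` Bw)" by (rule card_Un_le)
    also have "\<dots> \<le> card Fw + card Bw" by (intro add_mono card_image_le) (auto simp: Fw_def Bw_def)
    finally have c2: "card Bad \<le> card Fw + card Bw" .
    have R1: "R + 1 \<ge> mb" "R + 1 \<ge> mc" "K \<ge> ma" using i(1) unfolding R_def K_def I0_def by auto
    have "a * real K \<le> real (card SA)" using ma R1(3) unfolding a_def SA_def by auto
    also have "\<dots> \<le> real (card Fw) + real (card Bw)" using c1 c2 by linarith
    also have "\<dots> \<le> b * real (R + 1)"
    proof -
      have f1: "real (card Fw) \<le> (u + \<eta>) * real (R + 1)" using mb R1(1) unfolding Fw_def by blast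
      have f2: "real (card Bw) \<le> (u + \<eta>) * real (R + 1)" using mc R1(2) unfolding Bw_def by blast
      have "b * real (R + 1) = (u + \<eta>) * real (R + 1) + (u + \<eta>) * real (R + 1)"
        unfolding b_def by (simp add: algebra_simps)
      then show ?thesis using f1 f2 by linarith
    qed
    finally have main: "a * (real i - real N - real Q) \<le> b * (real i + real Q + 1)"
      unfolding iK R_def by (simp add: ac_simps)
    have "(a - b) * real i \<le> C0" using main unfolding C0_def by (simp add: algebra_simps)
    moreover have "\<eta> * real i \<le> (a - b) * real i" using ab by (intro mult_right_mono) auto
    moreover have "real i > C0 / \<eta>" using i(1) unfolding I0_def by linarith
    then have "\<eta> * real i > C0" using \<eta> by (simp add: field_simps)
    ultimately show False by linarith
  qed
  then show False using AE_False emeasure_space_1 by simp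
qed




theorem theorem5:
  fixes M :: "'a measure" and T :: "'a \<Rightarrow> 'a" and f :: "'a \<Rightarrow> real" and q :: int
  assumes "prob_space M"
    and "invertible_mpt M T"
    and "ergodic_map M T"
    and "f \<in> borel_measurable M"
  shows "(\<Union>N\<in>{N::nat. N > 0}. \<Inter>n\<in>{n::nat. n > N}.
            {x \<in> space M. f (ipow M T (- int n) x) < f (ipow M T (int n + q) x)}) \<in> null_sets M"
proof -
  have ipm[measurable]: "ipow M T a \<in> measurable M M" for a by (rule ipow_meas[OF assms(2)])
  have fm[measurable]: "f \<in> borel_measurable M" by fact
  define A where "A N = {x\<in>space M. \<forall>n::nat. n > N \<longrightarrow> f (ipow M T (- int n) x) < f (ipow M T (int n + q) x)}" for N :: nat
  have As: "A N \<in> sets M" for N unfolding A_def by measurable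
  have An: "A N \<in> null_sets M" for N
    by (rule main_null[OF assms As A_def])
  have eq: "(\<Inter>n\<in>{n::nat. n > N}. {x \<in> space M. f (ipow M T (- int n) x) < f (ipow M T (int n + q) x)}) = A N" for N
  proof -
    have "Suc N \<in> {n. n > N}" by simp
    then show ?thesis unfolding A_def by blast
  qed
  show ?thesis unfolding eq by (intro null_sets_UN') (auto simp: An)
qed


end
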